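(* Let $q\geq 2$ be an integer and $\theta\in\mathbb{Z}$. If $\theta$ is coprime with $q$, or if $q\mid\theta$, then the map $n\mapsto w_q(n)+\theta n$ is uniformly distributed modulo $q$: for every $x\in\mathbb{Z}$ the set $\{n\in\mathbb{N}: w_q(n)+\theta n\equiv x\pmod q\}$ has natural density $1/q$.
   Context: For an integer $q\geq 2$ and $n\in\mathbb{N}$: $v_q(0)=0$ and, for $n>0$, $v_q(n)=\max\{k: q^k\mid n\}$; $w_q(n)=\sum_{i=0}^n v_q(i)$. The natural density of $T\subseteq\mathbb{N}$ is $\lim_{N\to\infty}|\{n\in T: 0\leq n<N\}|/N$. *)

theory Defs
  imports "HOL-Analysis.Analysis"
begin

definition vq :: "nat \<Rightarrow> nat \<Rightarrow> nat" where
  "vq q n = (if n = 0 then 0 else Max {k. q ^ k dvd n})"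

definition wq :: "nat \<Rightarrow> nat \<Rightarrow> nat" where
  "wq q n = (\<Sum>i\<in>{0..n}. vq q i)"

definition has_natural_density :: "nat set \<Rightarrow> real \<Rightarrow> bool" where
  "has_natural_density T d \<longleftrightarrow>
     ((\<lambda>N. real (card {n \<in> T. n < N}) / real N) \<longlonglongrightarrow> d)"

end

theory Submission
  imports Defs
begin

lemma pow_gt_self: "(q::nat) \<ge> 2 \<Longrightarrow> k < q ^ k"
proof -
  assume "q \<ge> 2"
  have "k < 2 ^ k" by (rule less_exp)
  also have "(2::nat) ^ k \<le> q ^ k" using \<open>q \<ge> 2\<close> by (simp add: power_mono)
  finally show ?thesis .
qed

lemma vq_fin: fixes q n :: nat assumes "q \<ge> 2" "n > 0" shows "finite {k. q ^ k dvd n}"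
proof (rule finite_subset)
  show "{k. q ^ k dvd n} \<subseteq> atMost n"
  proof
    fix k assume "k \<in> {k. q ^ k dvd n}"
    then have "q ^ k \<le> n" using assms(2) by (simp add: dvd_imp_le)
    with pow_gt_self[OF assms(1), of k] show "k \<in> atMost n" by simp
  qed
qed simp

lemma vq_spec: assumes "q \<ge> 2" "n > 0"
  shows "q ^ vq q n dvd n \<and> \<not> q ^ Suc (vq q n) dvd n"
proof -
  let ?S = "{k. q ^ k dvd n}"
  have f: "finite ?S" by (rule vq_fin[OF assms])
  have ne: "?S \<noteq> {}" by (metis empty_iff mem_Collect_eq one_dvd power_0)
  have e: "vq q n = Max ?S" using assms by (simp add: vq_def)
  have "Max ?S \<in> ?S" using f ne by (rule Max_in)
  moreover have "Suc (Max ?S) \<notin> ?S" using Max_ge[OF f] by fastforce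
  ultimately show ?thesis using e by simp
qed

lemma vq_char: assumes "q \<ge> 2" "n > 0" "q ^ k dvd n" "\<not> q ^ Suc k dvd n"
  shows "vq q n = k"
proof -
  have "Max {k. q ^ k dvd n} = k"
  proof (rule Max_eqI)
    show "finite {k. q ^ k dvd n}" by (rule vq_fin[OF assms(1,2)])
    show "k \<in> {k. q ^ k dvd n}" using assms(3) by simp
    fix y assume "y \<in> {k. q ^ k dvd n}"
    then have y: "q ^ y dvd n" by simp
    show "y \<le> k"
    proof (rule ccontr)
      assume "\<not> y \<le> k"
      then have "q ^ Suc k dvd q ^ y" by (intro le_imp_power_dvd) simp
      with y assms(4) show False using dvd_trans by blast
    qed
  qed
  then show ?thesis using assms(2) by (simp add: vq_def)
qed

lemma vq_ndvd: assumes "q \<ge> 2" "\<not> q dvd n" shows "vq q n = 0"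
proof -
  have "n > 0" using assms(2) by (cases n) auto
  then show ?thesis using assms by (intro vq_char) auto
qed

lemma vq_mult: assumes "q \<ge> 2" "j > 0" shows "vq q (q * j) = Suc (vq q j)"
proof -
  have s: "q ^ vq q j dvd j \<and> \<not> q ^ Suc (vq q j) dvd j" by (rule vq_spec[OF assms])
  have qp: "q > 0" using assms by simp
  show ?thesis
  proof (rule vq_char)
    show "0 < q * j" using assms by simp
    show "q ^ Suc (vq q j) dvd q * j" using s by simp
    show "\<not> q ^ Suc (Suc (vq q j)) dvd q * j"
    proof
      assume "q ^ Suc (Suc (vq q j)) dvd q * j"
      then have "q * q ^ Suc (vq q j) dvd q * j" by (simp only: power_Suc)
      then show False using s qp nat_mult_dvd_cancel1 by blast
    qed
  qed (rule assms(1))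
qed

lemma wq_0: "wq q 0 = 0" by (simp add: wq_def vq_def)

lemma wq_Suc: "wq q (Suc n) = wq q n + vq q (Suc n)"
  by (simp add: wq_def)

lemma wq_block0: assumes "q \<ge> 2" "r < q" shows "wq q (q * m + r) = wq q (q * m)"
  using assms(2)
proof (induction r)
  case (Suc r)
  have "\<not> q dvd Suc (q * m + r)"
  proof
    assume "q dvd Suc (q * m + r)"
    then have "q dvd Suc r" by (metis add_Suc_right dvd_add_right_iff dvd_triv_left)
    then show False using Suc.prems by (simp add: nat_dvd_not_less)
  qed
  then have "vq q (Suc (q * m + r)) = 0" using vq_ndvd[OF assms(1)] by blast
  then show ?case using Suc by (simp add: wq_Suc)
qed simp

lemma wq_mult: assumes "q \<ge> 2" shows "wq q (q * m) = m + wq q m"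
proof (induction m)
  case 0 then show ?case by (simp add: wq_0)
next
  case (Suc m)
  have "q * Suc m = Suc (q * m + (q - 1))" using assms by simp
  then have "wq q (q * Suc m) = wq q (q * m + (q - 1)) + vq q (Suc (q * m + (q - 1)))"
    by (metis wq_Suc)
  also have "Suc (q * m + (q - 1)) = q * Suc m" using assms by simp
  also have "wq q (q * m + (q - 1)) = wq q (q * m)" using assms by (intro wq_block0) auto
  also have "vq q (q * Suc m) = Suc (vq q (Suc m))" using assms by (intro vq_mult) auto
  finally show ?case using Suc by (simp add: wq_Suc)
qed

lemma wq_block: assumes "q \<ge> 2" "r < q" shows "wq q (q * m + r) = m + wq q m"
  using wq_block0[OF assms] wq_mult[OF assms(1)] by simp


lemma count_blocks:
  fixes T :: "nat set"
  assumes "\<And>m. card {r. r < B \<and> B * m + r \<in> T} = c"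
  shows "card {n \<in> T. n < B * L} = L * c"
proof (induction L)
  case 0 then show ?case by simp
next
  case (Suc L)
  have e: "{n \<in> T. n < B * Suc L} = {n \<in> T. n < B * L} \<union> (\<lambda>r. B * L + r) ` {r. r < B \<and> B * L + r \<in> T}"
  proof (rule set_eqI)
    fix n
    show "n \<in> {n \<in> T. n < B * Suc L} \<longleftrightarrow> n \<in> {n \<in> T. n < B * L} \<union> (\<lambda>r. B * L + r) ` {r. r < B \<and> B * L + r \<in> T}"
    proof
      assume a: "n \<in> {n \<in> T. n < B * Suc L}"
      show "n \<in> {n \<in> T. n < B * L} \<union> (\<lambda>r. B * L + r) ` {r. r < B \<and> B * L + r \<in> T}"
      proof (cases "n < B * L")
        case True then show ?thesis using a by simp
      next
        case False
        then have "n = B * L + (n - B * L)" by simp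
        moreover have "n - B * L < B" using a False by auto
        ultimately show ?thesis using a by (metis (mono_tags, lifting) UnI2 image_eqI mem_Collect_eq)
      qed
    next
      assume "n \<in> {n \<in> T. n < B * L} \<union> (\<lambda>r. B * L + r) ` {r. r < B \<and> B * L + r \<in> T}"
      then show "n \<in> {n \<in> T. n < B * Suc L}" by auto
    qed
  qed
  have d: "{n \<in> T. n < B * L} \<inter> (\<lambda>r. B * L + r) ` {r. r < B \<and> B * L + r \<in> T} = {}" by auto
  have "card {n \<in> T. n < B * Suc L} = card {n \<in> T. n < B * L} + card ((\<lambda>r. B * L + r) ` {r. r < B \<and> B * L + r \<in> T})"
    unfolding e by (rule card_Un_disjoint) (auto simp: d)
  also have "card ((\<lambda>r. B * L + r) ` {r. r < B \<and> B * L + r \<in> T}) = c"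
    by (subst card_image) (auto simp: inj_on_def assms)
  finally show ?case using Suc by simp
qed

lemma abs_aux: "(x::real) \<le> z + w \<Longrightarrow> y \<le> z + w \<Longrightarrow> z \<le> y \<Longrightarrow> z \<le> x \<Longrightarrow> \<bar>x - y\<bar> \<le> w"
  by linarith

lemma density_blocks:
  fixes T :: "nat set"
  assumes B: "B > 0" and blk: "\<And>m. card {r. r < B \<and> B * m + r \<in> T} = c"
  shows "has_natural_density T (real c / real B)"
proof -
  define cnt where "cnt N = card {n \<in> T. n < N}" for N
  have bound: "\<bar>real (cnt N) / real N - real c / real B\<bar> \<le> real c / real N" if N: "N > 0" for N
  proof -
    define L where "L = N div B"
    have l1: "B * L \<le> N" unfolding L_def by simp
    have l2: "N < B * (L + 1)"
    proof -
      have "N mod B < B" using B by simp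
      moreover have "B * L + N mod B = N" unfolding L_def by simp
      ultimately show ?thesis by (simp add: algebra_simps)
    qed
    have c1: "L * c \<le> cnt N"
    proof -
      have "card {n \<in> T. n < B * L} \<le> cnt N" unfolding cnt_def
        by (rule card_mono) (use l1 in auto)
      then show ?thesis using count_blocks[OF blk] by simp
    qed
    have c2: "cnt N \<le> (L + 1) * c"
    proof -
      have "cnt N \<le> card {n \<in> T. n < B * (L + 1)}" unfolding cnt_def
        by (rule card_mono) (use l2 in auto)
      then show ?thesis using count_blocks[OF blk, of "L+1"] by simp
    qed
    have r1a: "real L * c \<le> cnt N" using c1 by (metis of_nat_le_iff of_nat_mult)
    have r1b: "cnt N \<le> (real L + 1) * c" using c2 by (metis of_nat_1 of_nat_add of_nat_le_iff of_nat_mult)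
    have r2a: "real B * L \<le> N" using l1 by (metis of_nat_le_iff of_nat_mult)
    have r2b: "real N \<le> real B * (L + 1)" using l2 by (metis less_imp_le of_nat_1 of_nat_add of_nat_le_iff of_nat_mult)
    have Bp: "real B > 0" using B by simp
    have Np: "real N > 0" using N by simp
    have cp: "real c \<ge> 0" by simp
    have key: "\<bar>real (cnt N) * B - real N * c\<bar> \<le> real c * B"
    proof -
      have a: "real (cnt N) * B \<le> (real L + 1) * c * B" using r1b Bp by (intro mult_right_mono) auto
      have b: "real B * L * c \<le> real N * c" using r2a cp by (intro mult_right_mono) auto
      have a2: "real L * c * B \<le> real (cnt N) * B" using r1a Bp by (intro mult_right_mono) auto
      have b2: "real N * c \<le> real B * (L + 1) * c" using r2b cp by (intro mult_right_mono) auto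
      have e1: "(real L + 1) * c * B = real L * c * B + real c * B" by (simp add: algebra_simps)
      have e2: "real B * (L + 1) * c = real L * c * B + real c * B" by (simp add: algebra_simps)
      have e3: "real B * L * c = real L * c * B" by (simp add: algebra_simps)
      have a': "real (cnt N) * B \<le> real L * c * B + real c * B" using a e1 by simp
      have b': "real N * c \<le> real L * c * B + real c * B" using b2 e2 by simp
      have b'': "real L * c * B \<le> real N * c" using b e3 by simp
      show ?thesis using abs_aux[OF a' b' b'' a2] .
    qed
    have eq: "real (cnt N) / real N - real c / real B = (real (cnt N) * B - real N * c) / (real N * B)"
      using Bp Np by (simp add: field_simps)
    have NB: "real N * B > 0" using Bp Np by simp
    have "\<bar>real (cnt N) / real N - real c / real B\<bar> = \<bar>real (cnt N) * B - real N * c\<bar> / (real N * B)"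
      unfolding eq by (rule abs_div_pos[OF NB, symmetric])
    also have "\<dots> \<le> real c * B / (real N * B)"
      using key NB by (intro divide_right_mono) (simp_all add: less_imp_le)
    also have "\<dots> = real c / real N" using Bp by simp
    finally show ?thesis .
  qed
  have "(\<lambda>N. real (cnt N) / real N - real c / real B) \<longlonglongrightarrow> 0"
  proof (rule Lim_null_comparison)
    show "\<forall>\<^sub>F N in sequentially. norm (real (cnt N) / real N - real c / real B) \<le> real c / real N"
      using eventually_gt_at_top[of "0::nat"]
    proof (rule eventually_mono)
      fix N :: nat assume "N > 0"
      from bound[OF this] show "norm (real (cnt N) / real N - real c / real B) \<le> real c / real N"
        by (simp only: real_norm_def)
    qed
    show "(\<lambda>N. real c / real N) \<longlonglongrightarrow> 0" by (rule lim_const_over_n)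
  qed
  then have "(\<lambda>N. real (cnt N) / real N) \<longlonglongrightarrow> real c / real B"
    by (simp only: LIM_zero_iff)
  then show ?thesis unfolding has_natural_density_def cnt_def .
qed


lemma res_unique:
  fixes q :: nat and \<theta> a y :: int
  assumes q: "q > 0" and cop: "coprime \<theta> (int q)"
  shows "card {r. r < q \<and> (a + \<theta> * int r) mod int q = y mod int q} = 1"
proof -
  define h where "h r = nat ((a + \<theta> * int r) mod int q)" for r
  have inj: "inj_on h {..<q}"
  proof (rule inj_onI)
    fix r1 r2 assume r1: "r1 \<in> {..<q}" and r2: "r2 \<in> {..<q}" and e: "h r1 = h r2"
    have "(a + \<theta> * int r1) mod int q = (a + \<theta> * int r2) mod int q"
      using e q unfolding h_def by (simp add: nat_eq_iff2)
    then have "int q dvd (a + \<theta> * int r1) - (a + \<theta> * int r2)"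
      by (simp add: mod_eq_dvd_iff)
    moreover have "(a + \<theta> * int r1) - (a + \<theta> * int r2) = \<theta> * (int r1 - int r2)"
      by (simp add: algebra_simps)
    ultimately have "int q dvd \<theta> * (int r1 - int r2)" by simp
    moreover have "coprime (int q) \<theta>" using cop by (simp add: coprime_commute)
    ultimately have "int q dvd (int r1 - int r2)" using coprime_dvd_mult_right_iff by blast
    then have "int r1 mod int q = int r2 mod int q" by (simp add: mod_eq_dvd_iff)
    then show "r1 = r2" using r1 r2 by simp
  qed
  have sub: "h ` {..<q} \<subseteq> {..<q}"
  proof
    fix t assume "t \<in> h ` {..<q}"
    then obtain r where "t = h r" by blast
    moreover have "(a + \<theta> * int r) mod int q < int q" using q by simp
    moreover have "(a + \<theta> * int r) mod int q \<ge> 0" using q by simp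
    ultimately show "t \<in> {..<q}" unfolding h_def by auto
  qed
  have surj: "h ` {..<q} = {..<q}" by (rule endo_inj_surj[OF _ sub inj]) simp
  have yq: "nat (y mod int q) \<in> {..<q}" using q by (simp add: nat_less_iff)
  then obtain r0 where r0: "r0 < q" "h r0 = nat (y mod int q)" using surj
    by (metis imageE lessThan_iff)
  have "{r. r < q \<and> (a + \<theta> * int r) mod int q = y mod int q} = {r0}"
  proof (rule set_eqI)
    fix r
    have iff: "(a + \<theta> * int r) mod int q = y mod int q \<longleftrightarrow> h r = nat (y mod int q)"
      unfolding h_def using q by (auto simp add: nat_eq_iff2 eq_nat_nat_iff)
    show "r \<in> {r. r < q \<and> (a + \<theta> * int r) mod int q = y mod int q} \<longleftrightarrow> r \<in> {r0}"
    proof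
      assume "r \<in> {r. r < q \<and> (a + \<theta> * int r) mod int q = y mod int q}"
      then have "r < q" "h r = h r0" using iff r0 by auto
      then show "r \<in> {r0}" using inj r0(1) by (simp add: inj_on_def)
    next
      assume "r \<in> {r0}"
      then show "r \<in> {r. r < q \<and> (a + \<theta> * int r) mod int q = y mod int q}" using iff r0 by auto
    qed
  qed
  then show ?thesis by simp
qed

lemma div_count:
  fixes q :: nat
  assumes q: "q > 0"
  shows "card {t. t < q * q \<and> P (t div q)} = q * card {s. s < q \<and> P s}"
proof -
  let ?f = "\<lambda>(s, r). q * s + r"
  have e: "{t. t < q * q \<and> P (t div q)} = ?f ` ({s. s < q \<and> P s} \<times> {..<q})"
  proof (rule set_eqI)
    fix t
    show "t \<in> {t. t < q * q \<and> P (t div q)} \<longleftrightarrow> t \<in> ?f ` ({s. s < q \<and> P s} \<times> {..<q})"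
    proof
      assume a: "t \<in> {t. t < q * q \<and> P (t div q)}"
      have "t div q < q" using a q by (simp add: div_less_iff_less_mult)
      moreover have "t mod q < q" using q by simp
      moreover have "t = ?f (t div q, t mod q)" by simp
      ultimately show "t \<in> ?f ` ({s. s < q \<and> P s} \<times> {..<q})" using a
        by (intro image_eqI[where x="(t div q, t mod q)"]) auto
    next
      assume "t \<in> ?f ` ({s. s < q \<and> P s} \<times> {..<q})"
      then obtain p where p: "p \<in> {s. s < q \<and> P s} \<times> {..<q}" "t = ?f p" by (rule imageE)
      obtain s r where pr: "p = (s, r)" by force
      have sr: "s < q" "P s" "r < q" "t = q * s + r" using p pr by auto
      have "q * s + r < q * s + q" using sr by simp
      also have "\<dots> = q * (s + 1)" by simp
      also have "\<dots> \<le> q * q" using sr by (intro mult_le_mono2) simp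
      finally have "t < q * q" using sr by simp
      moreover have "t div q = s" using sr q by simp
      ultimately show "t \<in> {t. t < q * q \<and> P (t div q)}" using sr by simp
    qed
  qed
  have inj: "inj_on ?f ({s. s < q \<and> P s} \<times> {..<q})"
  proof (rule inj_onI)
    fix x y assume x: "x \<in> {s. s < q \<and> P s} \<times> {..<q}" and y: "y \<in> {s. s < q \<and> P s} \<times> {..<q}"
      and e: "?f x = ?f y"
    obtain s1 r1 where x1: "x = (s1, r1)" by force
    obtain s2 r2 where y1: "y = (s2, r2)" by force
    have r: "r1 < q" "r2 < q" using x y x1 y1 by auto
    have e': "q * s1 + r1 = q * s2 + r2" using e x1 y1 by simp
    have "s1 = s2" using arg_cong[OF e', of "\<lambda>t. t div q"] r q by simp
    moreover have "r1 = r2" using arg_cong[OF e', of "\<lambda>t. t mod q"] r q by simp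
    ultimately show "x = y" using x1 y1 by simp
  qed
  have "card {t. t < q * q \<and> P (t div q)} = card ({s. s < q \<and> P s} \<times> {..<q})"
    unfolding e by (rule card_image[OF inj])
  also have "\<dots> = card {s. s < q \<and> P s} * q" by (simp add: card_cartesian_product)
  finally show ?thesis by simp
qed


theorem proposition3p4:
  fixes q :: nat and \<theta> :: int
  assumes "q \<ge> 2"
    and "coprime \<theta> (int q) \<or> int q dvd \<theta>"
  shows "\<forall>x::int. has_natural_density
           {n. (int (wq q n) + \<theta> * int n) mod int q = x mod int q} (1 / real q)"
proof
  fix x :: int
  let ?T = "{n. (int (wq q n) + \<theta> * int n) mod int q = x mod int q}"
  have q2: "q \<ge> 2" by (rule assms(1))
  have qp: "q > 0" using q2 by simp
  show "has_natural_density ?T (1 / real q)"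
    using assms(2)
  proof
    assume cop: "coprime \<theta> (int q)"
    have blk: "card {r. r < q \<and> q * m + r \<in> ?T} = 1" for m
    proof -
      define a where "a = int (m + wq q m) + \<theta> * int (q * m)"
      have "{r. r < q \<and> q * m + r \<in> ?T} = {r. r < q \<and> (a + \<theta> * int r) mod int q = x mod int q}"
      proof (rule Collect_cong)
        fix r
        show "(r < q \<and> q * m + r \<in> ?T) \<longleftrightarrow> (r < q \<and> (a + \<theta> * int r) mod int q = x mod int q)"
        proof (cases "r < q")
          case True
          have "int (wq q (q * m + r)) + \<theta> * int (q * m + r) = a + \<theta> * int r"
            unfolding a_def wq_block[OF q2 True] by (simp add: algebra_simps)
          then show ?thesis using True by simp
        qed simp
      qed
      then show ?thesis using res_unique[OF qp cop] by simp
    qed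
    have "has_natural_density ?T (real 1 / real q)"
      by (rule density_blocks[OF qp blk])
    then show ?thesis by simp
  next
    assume "int q dvd \<theta>"
    then obtain k where k: "\<theta> = int q * k" by (elim dvdE)
    have blk: "card {t. t < q * q \<and> q * q * m + t \<in> ?T} = q" for m
    proof -
      define a where "a = int (m + wq q m)"
      have "{t. t < q * q \<and> q * q * m + t \<in> ?T} = {t. t < q * q \<and> (\<lambda>s. (int s + a) mod int q = x mod int q) (t div q)}"
      proof (rule Collect_cong)
        fix t
        show "(t < q * q \<and> q * q * m + t \<in> ?T) \<longleftrightarrow> (t < q * q \<and> (\<lambda>s. (int s + a) mod int q = x mod int q) (t div q))"
        proof (cases "t < q * q")
          case True
          have tm: "t mod q < q" using qp by simp
          have n: "q * q * m + t = q * (q * m + t div q) + t mod q"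
            by (metis (no_types, lifting) add.assoc add_mult_distrib2 div_mult_mod_eq mult.assoc mult.commute)
          have w: "wq q (q * q * m + t) = q * m + t div q + m + wq q m"
          proof -
            have "wq q (q * q * m + t) = (q * m + t div q) + wq q (q * m + t div q)"
              unfolding n by (rule wq_block[OF q2 tm])
            also have "wq q (q * m + t div q) = m + wq q m"
              using True qp by (intro wq_block[OF q2]) (simp add: div_less_iff_less_mult)
            finally show ?thesis by simp
          qed
          have "int (wq q (q * q * m + t)) + \<theta> * int (q * q * m + t)
                = (int (t div q) + a) + int q * (int m + k * int (q * q * m + t))"
            unfolding w k a_def by (simp add: algebra_simps)
          then have "(int (wq q (q * q * m + t)) + \<theta> * int (q * q * m + t)) mod int q
                = (int (t div q) + a) mod int q"
            by simp
          then show ?thesis using True by simp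
        qed simp
      qed
      also have "card \<dots> = q * card {s. s < q \<and> (int s + a) mod int q = x mod int q}"
        by (rule div_count[OF qp])
      also have "card {s. s < q \<and> (int s + a) mod int q = x mod int q} = 1"
        using res_unique[OF qp, of 1 a x] by (simp add: add.commute)
      finally show ?thesis by simp
    qed
    have "q * q > 0" using qp by simp
    then have "has_natural_density ?T (real q / real (q * q))"
      by (rule density_blocks) (rule blk)
    then show ?thesis using qp by simp
  qed
qed

end
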